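(* There are two primitive embeddings of the lattice $A_5\oplus A_1$ into the root lattice $D_8$ that are not isomorphic up to the Weyl group $W(D_8)$, i.e. no element of $W(D_8)$ maps the image of one onto the image of the other. Explicitly, identifying $D_8(-1)$ with $\{v\in\mathbb Z^8:\sum v_i\text{ even}\}$ with standard basis $\varepsilon_1,\dots,\varepsilon_8$, and taking the basis $d_8=\varepsilon_1+\varepsilon_2$, $d_{9-i}=-\varepsilon_{i-1}+\varepsilon_i$ ($2\le i\le 8$), the two embeddings have images $\langle d_7,d_6,d_5,d_4,d_3\rangle\oplus\langle \varepsilon_7+\varepsilon_8\rangle$ and $\langle d_7,d_6,d_5,d_4,d_3\rangle\oplus\langle d_1\rangle$.
   Context: $A_k$, $D_k$ denote the negative-definite root lattices of the corresponding Dynkin types. An embedding is primitive if the quotient is torsion-free. The Weyl group $W(D_8)$ is generated by the reflections $x\mapsto x+(a\cdot x)a$ in roots $a$ ($a\cdot a=-2$) of $D_8$. *)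

theory Defs
  imports Main
begin

text \<open>Vectors of Z^8 are modelled as functions nat => int supported on {1..8};
  eps i is the standard basis vector.  The lattice D8 is the set of even-sum
  vectors, carrying the NEGATIVE definite form (so D8(-1) is the same set with the
  standard dot product).\<close>

definition eps :: "nat \<Rightarrow> nat \<Rightarrow> int" where
  "eps i = (\<lambda>j. if j = i then 1 else 0)"

definition vadd :: "(nat \<Rightarrow> int) \<Rightarrow> (nat \<Rightarrow> int) \<Rightarrow> nat \<Rightarrow> int" where
  "vadd x y = (\<lambda>j. x j + y j)"

definition vsmult :: "int \<Rightarrow> (nat \<Rightarrow> int) \<Rightarrow> nat \<Rightarrow> int" where
  "vsmult c x = (\<lambda>j. c * x j)"

definition D8 :: "(nat \<Rightarrow> int) set" where
  "D8 = {v. (\<forall>i. i \<notin> {1..8} \<longrightarrow> v i = 0) \<and> even (\<Sum>i=1..8. v i)}"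

definition formD8 :: "(nat \<Rightarrow> int) \<Rightarrow> (nat \<Rightarrow> int) \<Rightarrow> int" where
  "formD8 x y = - (\<Sum>i=1..8. x i * y i)"

definition rootsD8 :: "(nat \<Rightarrow> int) set" where
  "rootsD8 = {a \<in> D8. formD8 a a = -2}"

definition refl :: "(nat \<Rightarrow> int) \<Rightarrow> (nat \<Rightarrow> int) \<Rightarrow> nat \<Rightarrow> int" where
  "refl a x = vadd x (vsmult (formD8 a x) a)"

text \<open>Weyl group: all finite composites of reflections in roots (reflections are
  involutions, so this is the group they generate).\<close>
inductive_set WeylD8 :: "((nat \<Rightarrow> int) \<Rightarrow> (nat \<Rightarrow> int)) set" where
  id_in: "id \<in> WeylD8"
| step: "a \<in> rootsD8 \<Longrightarrow> w \<in> WeylD8 \<Longrightarrow> refl a \<circ> w \<in> WeylD8"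

text \<open>Primitive sublattice: D8 / L torsion free.\<close>
definition primitive_sub :: "(nat \<Rightarrow> int) set \<Rightarrow> bool" where
  "primitive_sub L \<longleftrightarrow> L \<subseteq> D8 \<and>
     (\<forall>v \<in> D8. \<forall>n::int. n \<noteq> 0 \<and> vsmult n v \<in> L \<longrightarrow> v \<in> L)"

definition zspan :: "(nat \<Rightarrow> int) list \<Rightarrow> (nat \<Rightarrow> int) set" where
  "zspan bs = {v. \<exists>c :: nat \<Rightarrow> int. v = (\<lambda>j. \<Sum>k<length bs. c k * (bs ! k) j)}"

text \<open>The abstract lattice A5 + A1: Z^6 (functions supported on {0..5}) with form
  minus the Cartan matrix of A5 (indices 0..4) + A1 (index 5).\<close>
definition cartanA5A1 :: "nat \<Rightarrow> nat \<Rightarrow> int" where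
  "cartanA5A1 i j =
     (if i = j then 2
      else if i < 5 \<and> j < 5 \<and> (i = j + 1 \<or> j = i + 1) then -1
      else 0)"

definition latA5A1 :: "(nat \<Rightarrow> int) set" where
  "latA5A1 = {x. \<forall>i \<ge> 6. x i = 0}"

definition formA5A1 :: "(nat \<Rightarrow> int) \<Rightarrow> (nat \<Rightarrow> int) \<Rightarrow> int" where
  "formA5A1 x y = - (\<Sum>i<6. \<Sum>j<6. x i * cartanA5A1 i j * y j)"

definition embedding_A5A1_D8 :: "((nat \<Rightarrow> int) \<Rightarrow> (nat \<Rightarrow> int)) \<Rightarrow> bool" where
  "embedding_A5A1_D8 f \<longleftrightarrow>
     f ` latA5A1 \<subseteq> D8 \<and> inj_on f latA5A1 \<and>
     (\<forall>x \<in> latA5A1. \<forall>y \<in> latA5A1. f (vadd x y) = vadd (f x) (f y)) \<and>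
     (\<forall>c. \<forall>x \<in> latA5A1. f (vsmult c x) = vsmult c (f x)) \<and>
     (\<forall>x \<in> latA5A1. \<forall>y \<in> latA5A1. formD8 (f x) (f y) = formA5A1 x y)"

definition dD8 :: "nat \<Rightarrow> nat \<Rightarrow> int" where
  "dD8 k = (if k = 8 then vadd (eps 1) (eps 2)
            else vadd (vsmult (-1) (eps (8 - k))) (eps (9 - k)))"

end

theory Submission
  imports Defs
begin


definition g :: "int \<Rightarrow> (nat \<Rightarrow> int) \<Rightarrow> nat \<Rightarrow> int" where
 "g s x = (\<lambda>j. if j=1 then -x 0 else if j=2 then x 0 - x 1 else if j=3 then x 1 - x 2
   else if j=4 then x 2 - x 3 else if j=5 then x 3 - x 4 else if j=6 then x 4
   else if j=7 then s * x 5 else if j=8 then x 5 else 0)"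

lemma six: "{..<6::nat} = {0,1,2,3,4,5}" by auto
lemma eight: "{1..8::nat} = {1,2,3,4,5,6,7,8}" by auto

lemma B1: "(\<lambda>j. \<Sum>k<length [dD8 7, dD8 6, dD8 5, dD8 4, dD8 3, vadd (eps 7) (eps 8)].
   c k * ([dD8 7, dD8 6, dD8 5, dD8 4, dD8 3, vadd (eps 7) (eps 8)] ! k) j) = g 1 c"
  by (rule ext) (simp add: six g_def dD8_def eps_def vadd_def vsmult_def numeral_eq_Suc)

lemma B2: "(\<lambda>j. \<Sum>k<length [dD8 7, dD8 6, dD8 5, dD8 4, dD8 3, dD8 1].
   c k * ([dD8 7, dD8 6, dD8 5, dD8 4, dD8 3, dD8 1] ! k) j) = g (-1) c"
  by (rule ext) (simp add: six g_def dD8_def eps_def vadd_def vsmult_def numeral_eq_Suc)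

lemma g_restr: "g s (\<lambda>k. if k < 6 then c k else 0) = g s c"
  by (simp add: g_def)

lemma img_range: "g s ` latA5A1 = range (g s)"
proof (rule set_eqI, rule iffI)
  fix v assume "v \<in> g s ` latA5A1" then show "v \<in> range (g s)" by blast
next
  fix v assume "v \<in> range (g s)"
  then obtain c where v: "v = g s c" by blast
  have l: "(\<lambda>k. if k < 6 then c k else 0) \<in> latA5A1" by (simp add: latA5A1_def)
  have e: "v = g s (\<lambda>k. if k < 6 then c k else 0)" using v by (simp only: g_restr)
  show "v \<in> g s ` latA5A1" unfolding e by (rule imageI[OF l])
qed

lemma zs1: "zspan [dD8 7, dD8 6, dD8 5, dD8 4, dD8 3, vadd (eps 7) (eps 8)] = range (g 1)"
  unfolding zspan_def B1 by auto
lemma zs2: "zspan [dD8 7, dD8 6, dD8 5, dD8 4, dD8 3, dD8 1] = range (g (-1))"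
  unfolding zspan_def B2 by auto


definition C :: "int \<Rightarrow> (nat \<Rightarrow> int) set" where
 "C s = {v. (\<forall>i. i \<notin> {1..8} \<longrightarrow> v i = 0) \<and> v 1 + v 2 + v 3 + v 4 + v 5 + v 6 = 0 \<and> v 7 = s * v 8}"

lemma img_C: "g s ` latA5A1 = C s"
proof
  show "g s ` latA5A1 \<subseteq> C s" by (auto simp: C_def g_def)
  show "C s \<subseteq> g s ` latA5A1"
  proof
    fix v assume v: "v \<in> C s"
    define x where "x = (\<lambda>k::nat. if k = 0 then - v 1 else if k = 1 then -v 1 - v 2
       else if k = 2 then -v 1 - v 2 - v 3 else if k = 3 then -v 1 - v 2 - v 3 - v 4
       else if k = 4 then v 6 else if k = 5 then v 8 else 0)"
    have "x \<in> latA5A1" by (simp add: x_def latA5A1_def)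
    moreover have "g s x = v"
    proof
      fix j
      have s6: "v 6 = - v 1 - v 2 - v 3 - v 4 - v 5" using v by (simp add: C_def)
      show "g s x j = v j"
      proof (cases "j \<in> {1..8}")
        case True
        then show ?thesis using v s6 unfolding eight by (auto simp: C_def g_def x_def)
      next
        case False
        then show ?thesis using v by (auto simp: C_def g_def x_def)
      qed
    qed
    ultimately show "v \<in> g s ` latA5A1" by blast
  qed
qed

lemma C_D8: assumes "s = 1 \<or> s = -1" shows "C s \<subseteq> D8"
proof
  fix v assume v: "v \<in> C s"
  have "(\<Sum>i=1..8. v i) = (v 1 + v 2 + v 3 + v 4 + v 5 + v 6) + v 7 + v 8"
    unfolding eight by (simp add: algebra_simps)
  also have "\<dots> = (s + 1) * v 8" using v by (simp add: C_def algebra_simps)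
  finally show "v \<in> D8" using v assms by (auto simp: D8_def C_def)
qed

lemma C_prim: assumes "s = 1 \<or> s = -1" shows "primitive_sub (C s)"
  unfolding primitive_sub_def
proof (intro conjI ballI allI impI)
  show "C s \<subseteq> D8" using C_D8[OF assms] .
  fix v n assume v: "v \<in> D8" and h: "n \<noteq> 0 \<and> vsmult n v \<in> C s"
  have a: "n * (v 1 + v 2 + v 3 + v 4 + v 5 + v 6) = 0"
    using h by (simp add: C_def vsmult_def algebra_simps)
  have n: "n \<noteq> 0" using h by simp
  have a': "v 1 + v 2 + v 3 + v 4 + v 5 + v 6 = 0" using a n by simp
  have b': "v 7 = s * v 8" using h by (auto simp: C_def vsmult_def)
  show "v \<in> C s" using a' b' v unfolding C_def D8_def by blast
qed

lemma emb: assumes "s = 1 \<or> s = -1" shows "embedding_A5A1_D8 (g s)"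
  unfolding embedding_A5A1_D8_def
proof (intro conjI ballI allI)
  show "g s ` latA5A1 \<subseteq> D8" using img_C C_D8[OF assms] by simp
  show "inj_on (g s) latA5A1"
  proof
    fix x y assume x: "x \<in> latA5A1" and y: "y \<in> latA5A1" and e: "g s x = g s y"
    have e1: "\<And>j. g s x j = g s y j" using e by simp
    show "x = y"
    proof
      fix k
      show "x k = y k"
      proof (cases "k < 6")
        case True
        have "x 0 = y 0" using e1[of 1] by (simp add: g_def)
        moreover have "x 1 = y 1" using e1[of 2] e1[of 1] by (simp add: g_def)
        moreover have "x 2 = y 2" using e1[of 3] e1[of 2] e1[of 1] by (simp add: g_def)
        moreover have "x 3 = y 3" using e1[of 4] e1[of 3] e1[of 2] e1[of 1] by (simp add: g_def)
        moreover have "x 4 = y 4" using e1[of 6] by (simp add: g_def)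
        moreover have "x 5 = y 5" using e1[of 8] by (simp add: g_def)
        ultimately show ?thesis using True by (auto simp: less_Suc_eq numeral_eq_Suc)
      next
        case False
        then show ?thesis using x y by (simp add: latA5A1_def)
      qed
    qed
  qed
  fix x y
  show "g s (vadd x y) = vadd (g s x) (g s y)"
    by (rule ext) (simp add: g_def vadd_def algebra_simps)
  fix c
  show "g s (vsmult c x) = vsmult c (g s x)"
    by (rule ext) (simp add: g_def vsmult_def algebra_simps)
next
  fix x y
  have ss: "s * s = 1" using assms by auto
  have "formD8 (g s x) (g s y) = - ((- x 0) * (- y 0) + (x 0 - x 1) * (y 0 - y 1)
     + (x 1 - x 2) * (y 1 - y 2) + (x 2 - x 3) * (y 2 - y 3) + (x 3 - x 4) * (y 3 - y 4)
     + x 4 * y 4 + (s * s) * (x 5 * y 5) + x 5 * y 5)"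
    unfolding formD8_def eight by (simp add: g_def algebra_simps)
  also have "\<dots> = formA5A1 x y"
    by (simp add: formA5A1_def six cartanA5A1_def ss algebra_simps)
  finally show "formD8 (g s x) (g s y) = formA5A1 x y" .
qed


definition Q :: "(nat \<Rightarrow> int) \<Rightarrow> bool" where
  "Q u \<longleftrightarrow> (\<forall>i\<in>{1..8}. u i = 1 \<or> u i = -1) \<and> (\<forall>i. i \<notin> {1..8} \<longrightarrow> u i = 0)"

definition P :: "(nat \<Rightarrow> int) \<Rightarrow> int" where
  "P u = (\<Prod>i=1..8. u i)"

lemma sq_le2: "(x::int) * x \<le> 2 \<Longrightarrow> x = 0 \<or> x = 1 \<or> x = -1"
proof (rule ccontr)
  assume h: "x * x \<le> 2" "\<not> (x = 0 \<or> x = 1 \<or> x = -1)"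
  then have "\<bar>x\<bar> \<ge> 2" by auto
  then have "\<bar>x\<bar> * \<bar>x\<bar> \<ge> 2 * 2" by (metis mult_mono abs_ge_zero order_trans zero_le_numeral)
  then show False using h(1) by (simp add: abs_mult[symmetric])
qed

lemma refl_Q:
  assumes a: "a \<in> rootsD8" and u: "Q u"
  shows "Q (refl a u) \<and> P (refl a u) = P u"
proof -
  let ?T = "{1..8::nat}"
  have supp: "\<And>i. i \<notin> ?T \<Longrightarrow> a i = 0" using a by (auto simp: rootsD8_def D8_def)
  have n2: "(\<Sum>i\<in>?T. a i * a i) = 2" using a by (simp add: rootsD8_def formD8_def)
  have vals: "\<And>i. a i = 0 \<or> a i = 1 \<or> a i = -1"
  proof -
    fix i
    show "a i = 0 \<or> a i = 1 \<or> a i = -1"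
    proof (cases "i \<in> ?T")
      case True
      have "a i * a i \<le> (\<Sum>i\<in>?T. a i * a i)"
        by (rule member_le_sum) (use True in auto)
      then show ?thesis using n2 sq_le2 by simp
    next
      case False then show ?thesis using supp by simp
    qed
  qed
  define S where "S = {i\<in>?T. a i \<noteq> 0}"
  have finS: "finite S" by (simp add: S_def)
  have "(\<Sum>i\<in>?T. a i * a i) = (\<Sum>i\<in>S. a i * a i)"
    by (rule sum.mono_neutral_right) (auto simp: S_def)
  also have "\<dots> = (\<Sum>i\<in>S. 1)"
  proof (rule sum.cong)
    fix x assume "x \<in> S"
    then have "a x \<noteq> 0" by (simp add: S_def)
    then have "a x = 1 \<or> a x = -1" using vals[of x] by simp
    then show "a x * a x = 1" by auto
  qed simp
  finally have "card S = 2" using n2 by simp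
  then obtain p q where pq: "p \<noteq> q" "S = {p, q}" by (auto simp: card_2_iff)
  have pT: "p \<in> ?T" and qT: "q \<in> ?T" using pq by (auto simp: S_def)
  have ap: "a p = 1 \<or> a p = -1" and aq: "a q = 1 \<or> a q = -1"
    using pq vals by (auto simp: S_def)
  have up: "u p = 1 \<or> u p = -1" and uq: "u q = 1 \<or> u q = -1"
    using u pT qT by (auto simp: Q_def)
  have az: "\<And>k. k \<noteq> p \<Longrightarrow> k \<noteq> q \<Longrightarrow> a k = 0"
  proof -
    fix k assume "k \<noteq> p" "k \<noteq> q"
    then have "k \<notin> S" using pq by auto
    then show "a k = 0" using supp by (auto simp: S_def)
  qed
  define m where "m = (\<Sum>i\<in>?T. a i * u i)"
  have "m = (\<Sum>i\<in>S. a i * u i)"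
    unfolding m_def by (rule sum.mono_neutral_right) (auto simp: S_def)
  then have m: "m = a p * u p + a q * u q" using pq by simp
  have r: "\<And>k. refl a u k = u k - m * a k"
    by (simp add: refl_def vadd_def vsmult_def formD8_def m_def)
  show ?thesis
  proof (cases "m = 0")
    case True
    then have "refl a u = u" using r by (simp add: fun_eq_iff)
    then show ?thesis using u by simp
  next
    case False
    have fl: "\<And>k. refl a u k = (if k = p \<or> k = q then - u k else u k)"
    proof -
      fix k
      show "refl a u k = (if k = p \<or> k = q then - u k else u k)"
        using r[of k] az[of k] m False ap aq up uq pq(1) by auto
    qed
    have Qr: "Q (refl a u)" using u pT qT unfolding Q_def fl by auto
    have "P (refl a u) = (\<Prod>i\<in>?T - {p,q}. refl a u i) * (\<Prod>i\<in>{p,q}. refl a u i)"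
      unfolding P_def by (rule prod.subset_diff) (use pT qT in auto)
    also have "(\<Prod>i\<in>?T - {p,q}. refl a u i) = (\<Prod>i\<in>?T - {p,q}. u i)"
      by (rule prod.cong) (auto simp: fl)
    also have "(\<Prod>i\<in>{p,q}. refl a u i) = (\<Prod>i\<in>{p,q}. u i)"
      using pq(1) by (simp add: fl)
    also have "(\<Prod>i\<in>?T - {p,q}. u i) * (\<Prod>i\<in>{p,q}. u i) = P u"
      unfolding P_def by (rule prod.subset_diff[symmetric]) (use pT qT in auto)
    finally show ?thesis using Qr by simp
  qed
qed

lemma weyl_Q: "w \<in> WeylD8 \<Longrightarrow> Q u \<Longrightarrow> Q (w u) \<and> P (w u) = P u"
proof (induction arbitrary: u rule: WeylD8.induct)
  case id_in then show ?case by simp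
next
  case (step a w)
  then have "Q (w u) \<and> P (w u) = P u" by blast
  then show ?case using refl_Q[OF step.hyps(1)] by auto
qed

lemma QC_test: "\<And>a b c d e f ::int. a + b+c+d+e+f = 0 \<Longrightarrow> (a = 1 \<or> a = -1) \<Longrightarrow> (b = 1 \<or> b = -1) \<Longrightarrow> (c = 1 \<or> c = -1) \<Longrightarrow> (d = 1 \<or> d = -1) \<Longrightarrow> (e = 1 \<or> e = -1) \<Longrightarrow> (f = 1 \<or> f = -1) \<Longrightarrow> a*b*c*d*e*f = -1"
  by auto

lemma QC: assumes "v \<in> C s" "Q v" shows "P v = - s"
proof -
  have h: "v 1 + v 2 + v 3 + v 4 + v 5 + v 6 = 0" "v 7 = s * v 8" using assms(1) by (auto simp: C_def)
  have q: "\<And>i. i \<in> {1..8} \<Longrightarrow> v i = 1 \<or> v i = -1" using assms(2) by (auto simp: Q_def)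
  have "P v = v 1 * v 2 * v 3 * v 4 * v 5 * v 6 * (v 7 * v 8)" unfolding P_def eight by (simp add: algebra_simps)
  also have "v 7 * v 8 = s" using h(2) q[of 8] by auto
  also have "v 1 * v 2 * v 3 * v 4 * v 5 * v 6 = -1"
    using h(1) q[of 1] q[of 2] q[of 3] q[of 4] q[of 5] q[of 6] by auto
  finally show ?thesis by simp
qed


theorem mainTheorem5:
  shows "\<exists>f1 f2. embedding_A5A1_D8 f1 \<and> embedding_A5A1_D8 f2 \<and>
     f1 ` latA5A1 = zspan [dD8 7, dD8 6, dD8 5, dD8 4, dD8 3, vadd (eps 7) (eps 8)] \<and>
     f2 ` latA5A1 = zspan [dD8 7, dD8 6, dD8 5, dD8 4, dD8 3, dD8 1] \<and>
     primitive_sub (f1 ` latA5A1) \<and> primitive_sub (f2 ` latA5A1) \<and>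
     \<not> (\<exists>w \<in> WeylD8. w ` (f1 ` latA5A1) = f2 ` latA5A1)"
proof (intro exI conjI)
  show "embedding_A5A1_D8 (g 1)" by (rule emb) simp
  show "embedding_A5A1_D8 (g (-1))" by (rule emb) simp
  show "g 1 ` latA5A1 = zspan [dD8 7, dD8 6, dD8 5, dD8 4, dD8 3, vadd (eps 7) (eps 8)]"
    unfolding img_range zs1 ..
  show "g (-1) ` latA5A1 = zspan [dD8 7, dD8 6, dD8 5, dD8 4, dD8 3, dD8 1]"
    unfolding img_range zs2 ..
  show "primitive_sub (g 1 ` latA5A1)" unfolding img_C by (rule C_prim) simp
  show "primitive_sub (g (-1) ` latA5A1)" unfolding img_C by (rule C_prim) simp
  show "\<not> (\<exists>w \<in> WeylD8. w ` (g 1 ` latA5A1) = g (-1) ` latA5A1)"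
  proof
    assume "\<exists>w \<in> WeylD8. w ` (g 1 ` latA5A1) = g (-1) ` latA5A1"
    then obtain w where w: "w \<in> WeylD8" "w ` C 1 = C (-1)" unfolding img_C by blast
    define u0 :: "nat \<Rightarrow> int" where "u0 = (\<lambda>i. if i = 1 \<or> i = 2 \<or> i = 3 \<or> i = 7 \<or> i = 8 then 1
        else if i = 4 \<or> i = 5 \<or> i = 6 then -1 else 0)"
    have u0C: "u0 \<in> C 1" by (auto simp: C_def u0_def)
    have u0Q: "Q u0" unfolding Q_def eight by (auto simp: u0_def)
    have u0P: "P u0 = -1" using QC[OF u0C u0Q] by simp
    have "w u0 \<in> C (-1)" using w(2) u0C by blast
    moreover have "Q (w u0)" "P (w u0) = -1" using weyl_Q[OF w(1) u0Q] u0P by auto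
    ultimately show False using QC[of "w u0" "-1"] by simp
  qed
qed

end
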